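(* For every distribution $q$ over $[n]$ and every $x\in(0,1)$, \[ \max_{S\subseteq[n]:\ q(S)\ge x} R(q,S)\ \ge\ \frac{\|q_{-x}\|_{1/2}}{(\log_2(n/x)+1)^2}-4 . \]
   Context: For nonempty $S\subseteq[n]$, $q(S)=\sum_{i\in S}q_i$, $M(q,S)=\max_{i\in S}q_i$ and $R(q,S)=\big\lfloor \frac{q(S)}{2M(q,S)}\big\rfloor$. For $x\ge0$, $q_{-x}$ is the vector obtained from $q$ by iteratively removing its smallest entries, stopping just before the total of the removed entries would exceed $x$. For a nonnegative vector $v$ and $r\in(0,1)$, $\|v\|_r=(\sum_i v_i^r)^{1/r}$. *)

theory Defs
  imports Complex_Main
begin

text \<open>Vectors q over [n] = {1..n} are functions nat => real (only values on {1..n} matter).\<close>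

definition qsum :: "(nat \<Rightarrow> real) \<Rightarrow> nat set \<Rightarrow> real" where
  "qsum q S = (\<Sum>i\<in>S. q i)"

definition qmax :: "(nat \<Rightarrow> real) \<Rightarrow> nat set \<Rightarrow> real" where
  "qmax q S = Max (q ` S)"

definition Rq :: "(nat \<Rightarrow> real) \<Rightarrow> nat set \<Rightarrow> int" where
  "Rq q S = \<lfloor>qsum q S / (2 * qmax q S)\<rfloor>"

text \<open>Iterative removal of smallest entries from an ascending sorted list:
  acc is the total removed so far; stop just before the total would exceed x.\<close>
fun remove_small :: "real list \<Rightarrow> real \<Rightarrow> real \<Rightarrow> real list" where
  "remove_small [] acc x = []"
| "remove_small (y # ys) acc x =
     (if acc + y \<le> x then remove_small ys (acc + y) x else y # ys)"

text \<open>q_{-x}, as the list of remaining entries (ties do not affect the multiset of values).\<close>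
definition q_minus :: "nat \<Rightarrow> (nat \<Rightarrow> real) \<Rightarrow> real \<Rightarrow> real list" where
  "q_minus n q x = remove_small (sort (map q [1..<n+1])) 0 x"

definition rnorm :: "real \<Rightarrow> real list \<Rightarrow> real" where
  "rnorm r v = (\<Sum>a\<leftarrow>v. a powr r) powr (1 / r)"

definition is_distribution :: "nat \<Rightarrow> (nat \<Rightarrow> real) \<Rightarrow> bool" where
  "is_distribution n q \<longleftrightarrow> (\<forall>i\<in>{1..n}. q i \<ge> 0) \<and> (\<Sum>i=1..n. q i) = 1"

end

theory Submission
  imports Defs "HOL-Analysis.Analysis" "HOL-Library.Multiset"
begin

lemma remove_small_drop:
  assumes "acc \<le> x"
  shows "\<exists>j. remove_small ys acc x = drop j ys \<and> acc + sum_list (take j ys) \<le> x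
     \<and> (j < length ys \<longrightarrow> acc + sum_list (take (Suc j) ys) > x)"
  using assms
proof (induction ys arbitrary: acc)
  case Nil
  then show ?case by (intro exI[of _ 0]) simp
next
  case (Cons y ys)
  show ?case
  proof (cases "acc + y \<le> x")
    case True
    from Cons.IH[OF True] obtain j where j: "remove_small ys (acc + y) x = drop j ys"
      "acc + y + sum_list (take j ys) \<le> x"
      "j < length ys \<longrightarrow> acc + y + sum_list (take (Suc j) ys) > x" by blast
    show ?thesis using True j by (intro exI[of _ "Suc j"]) (auto simp: add.assoc)
  next
    case False
    then show ?thesis using Cons.prems by (intro exI[of _ 0]) auto
  qed
qed

lemma list_cs:
  fixes f :: "real \<Rightarrow> real"
  shows "(\<Sum>a\<leftarrow>xs. f a)\<^sup>2 \<le> real (length xs) * (\<Sum>a\<leftarrow>xs. (f a)\<^sup>2)"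
proof -
  have "(\<Sum>a\<leftarrow>xs. f a) = (\<Sum>i\<in>{0..<length xs}. f (xs!i))"
    by (simp add: sum_list_sum_nth)
  moreover have "(\<Sum>a\<leftarrow>xs. (f a)\<^sup>2) = (\<Sum>i\<in>{0..<length xs}. (f (xs!i))\<^sup>2)"
    by (simp add: sum_list_sum_nth)
  ultimately show ?thesis
    using sum_squared_le_sum_of_squares[of "\<lambda>i. f (xs!i)" "{0..<length xs}"]
    by (simp add: mult.commute)
qed

lemma sum_list_filter_sort:
  "sum_list (filter P (sort xs)) = sum_list (filter P (xs::real list))"
proof -
  have "mset (filter P (sort xs)) = mset (filter P xs)" by simp
  then show ?thesis by (metis sum_mset_sum_list)
qed

lemma sum_filter_F:
  "sum_list (filter P (sort (map (q::nat\<Rightarrow>real) [1..<n+1]))) = (\<Sum>i\<in>{i\<in>{1..n}. P (q i)}. q i)"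
proof -
  have "sum_list (filter P (sort (map q [1..<n+1]))) = sum_list (map q (filter (P \<circ> q) [1..<n+1]))"
    by (simp only: sum_list_filter_sort filter_map)
  also have "\<dots> = sum q (set (filter (P \<circ> q) [1..<n+1]))"
    by (simp add: sum_list_distinct_conv_sum_set)
  also have "set (filter (P \<circ> q) [1..<n+1]) = {i\<in>{1..n}. P (q i)}" by auto
  finally show ?thesis .
qed

lemma sum_list_filter_mono:
  fixes xs :: "real list"
  assumes "\<forall>a\<in>set xs. a \<ge> 0" "\<And>a. P a \<Longrightarrow> Q a"
  shows "sum_list (filter P xs) \<le> sum_list (filter Q xs)"
  using assms by (induction xs) (auto intro: add_mono)

lemma sum_list_drop_le:
  fixes xs :: "real list"
  assumes "\<forall>a\<in>set xs. a \<ge> 0"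
  shows "sum_list (filter P (drop j xs)) \<le> sum_list (filter P xs)"
proof -
  have "sum_list (filter P xs) = sum_list (filter P (take j xs)) + sum_list (filter P (drop j xs))"
    by (metis append_take_drop_id filter_append sum_list_append)
  moreover have "sum_list (filter P (take j xs)) \<ge> 0"
    using assms by (intro sum_list_nonneg) (auto dest: in_set_takeD)
  ultimately show ?thesis by linarith
qed

lemma sum_list_lower:
  fixes xs :: "real list"
  assumes "\<forall>a\<in>set xs. a \<ge> c"
  shows "real (length xs) * c \<le> sum_list xs"
  using assms by (induction xs) (auto simp: algebra_simps)

lemma sum_list_partition:
  fixes g :: "real \<Rightarrow> real" and kb :: "real \<Rightarrow> nat"
  assumes "\<forall>a\<in>set v. kb a < L"
  shows "(\<Sum>a\<leftarrow>v. g a) = (\<Sum>k<L. (\<Sum>a\<leftarrow>filter (\<lambda>a. kb a = k) v. g a))"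
  using assms
proof (induction v)
  case Nil then show ?case by simp
next
  case (Cons b v)
  have "(\<Sum>k<L. (\<Sum>a\<leftarrow>filter (\<lambda>a. kb a = k) (b#v). g a))
      = (\<Sum>k<L. (if kb b = k then g b else 0) + (\<Sum>a\<leftarrow>filter (\<lambda>a. kb a = k) v. g a))"
    by (intro sum.cong) auto
  also have "\<dots> = (\<Sum>k<L. if kb b = k then g b else 0) + (\<Sum>k<L. (\<Sum>a\<leftarrow>filter (\<lambda>a. kb a = k) v. g a))"
    by (simp add: sum.distrib)
  also have "(\<Sum>k<L. if kb b = k then g b else 0) = g b"
    using Cons.prems by (intro trans[OF sum.delta'[of "{..<L}" "kb b" "\<lambda>_. g b"]]) auto
  finally show ?case using Cons by simp
qed

lemma sum_list_take_le:
  fixes xs :: "real list"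
  assumes "\<forall>a\<in>set xs. a \<ge> 0"
  shows "sum_list (filter P (take j xs)) \<le> sum_list (filter P xs)"
proof -
  have "sum_list (filter P xs) = sum_list (filter P (take j xs)) + sum_list (filter P (drop j xs))"
    by (metis append_take_drop_id filter_append sum_list_append)
  moreover have "sum_list (filter P (drop j xs)) \<ge> 0"
    using assms by (intro sum_list_nonneg) (auto dest: in_set_dropD)
  ultimately show ?thesis by linarith
qed

lemma dyadic:
  fixes a :: real
  assumes "0 < a" "a \<le> 1"
  shows "(1/2)^(nat \<lfloor>log 2 (1/a)\<rfloor> + 1) < a \<and> a \<le> (1/2)^(nat \<lfloor>log 2 (1/a)\<rfloor>)"
proof -
  define l where "l = log 2 (1/a)"
  have l0: "l \<ge> 0" unfolding l_def using assms by simp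
  define k where "k = nat \<lfloor>l\<rfloor>"
  have rk: "real k = of_int \<lfloor>l\<rfloor>" unfolding k_def using l0 by simp
  have k1: "real k \<le> l" using rk by linarith
  have k2: "l < real k + 1" using rk by linarith
  have pl: "2 powr l = 1/a" unfolding l_def using assms by simp
  have "2 ^ k = 2 powr (real k)" by (simp add: powr_realpow)
  also have "\<dots> \<le> 2 powr l" using k1 by simp
  finally have h1: "2 ^ k \<le> 1/a" using pl by simp
  have "1/a < 2 powr (real k + 1)" using k2 pl by (metis powr_less_cancel_iff one_less_numeral_iff semiring_norm(76))
  also have "\<dots> = 2 ^ (k+1)" using powr_realpow[of 2 "k+1"] by (simp add: add.commute)
  finally have h2: "1/a < 2^(k+1)" .
  have "a \<le> 1 / 2^k" using h1 assms by (simp add: field_simps)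
  moreover have "1 / 2^(k+1) < a" using h2 assms by (simp add: field_simps)
  ultimately show ?thesis unfolding k_def l_def by (simp add: power_one_over)
qed

theorem lemmaC4:
  fixes n :: nat and q :: "nat \<Rightarrow> real" and x :: real
  assumes "is_distribution n q" and "0 < x" and "x < 1"
  shows "real_of_int (Max {Rq q S | S. S \<subseteq> {1..n} \<and> S \<noteq> {} \<and> qsum q S \<ge> x})
           \<ge> rnorm (1/2) (q_minus n q x) / (log 2 (real n / x) + 1)\<^sup>2 - 4"
proof -
  define A where "A = {Rq q S | S. S \<subseteq> {1..n} \<and> S \<noteq> {} \<and> qsum q S \<ge> x}"
  define R where "R = real_of_int (Max A)"
  have qnn: "\<And>i. i \<in> {1..n} \<Longrightarrow> q i \<ge> 0" and qs1: "(\<Sum>i=1..n. q i) = 1"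
    using assms(1) unfolding is_distribution_def by auto
  have n1: "n \<ge> 1"
  proof (rule ccontr)
    assume "\<not> n \<ge> 1" then have "n = 0" by simp
    then show False using qs1 by simp
  qed
  have finA: "finite A"
  proof -
    have "A \<subseteq> (\<lambda>S. Rq q S) ` Pow {1..n}" unfolding A_def by auto
    then show ?thesis by (rule finite_subset) simp
  qed
  have memA: "real_of_int (Rq q S) \<le> R" if "S \<subseteq> {1..n}" "S \<noteq> {}" "qsum q S \<ge> x" for S
  proof -
    have "Rq q S \<in> A" unfolding A_def using that by auto
    then show ?thesis unfolding R_def using finA by simp
  qed
  have R0: "R \<ge> 0"
  proof -
    have qs: "qsum q {1..n} = 1" using qs1 unfolding qsum_def by simp
    have "q 1 \<le> qmax q {1..n}" unfolding qmax_def using n1 by (intro Max_ge) auto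
    then have "qmax q {1..n} \<ge> 0" using qnn[of 1] n1 by simp
    then have "Rq q {1..n} \<ge> 0" unfolding Rq_def using qs by simp
    moreover have "real_of_int (Rq q {1..n}) \<le> R" using memA[of "{1..n}"] n1 qs assms(3) by simp
    ultimately show ?thesis by linarith
  qed
  define s where "s = sort (map q [1..<n+1])"
  have sets: "set s = q ` {1..n}" unfolding s_def by auto
  have snn: "\<forall>a\<in>set s. a \<ge> 0" using sets qnn by auto
  have ssorted: "sorted s" unfolding s_def by simp
  have slen: "length s = n" unfolding s_def by simp
  have sumF: "\<And>P. sum_list (filter P s) = (\<Sum>i\<in>{i\<in>{1..n}. P (q i)}. q i)"
    unfolding s_def by (rule sum_filter_F)
  obtain j where j: "q_minus n q x = drop j s" "j < length s \<longrightarrow> sum_list (take (Suc j) s) > x"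
    using remove_small_drop[of 0 x s] assms(2) unfolding q_minus_def s_def by auto
  define v where "v = drop j s"
  have vs: "\<And>a. a \<in> set v \<Longrightarrow> a \<in> set s" unfolding v_def by (auto dest: in_set_dropD)
  have keyB: "x < (\<Sum>i\<in>{i\<in>{1..n}. q i \<le> c}. q i)" if a: "a \<in> set v" "a \<le> c" for a c
  proof -
    obtain k where k: "k < length v" "a = v ! k" using a(1) by (auto simp: in_set_conv_nth)
    have jl: "j < length s" using k unfolding v_def by simp
    have ai: "a = s ! (j + k)" using k jl unfolding v_def by simp
    have ik: "j + k < length s" using k unfolding v_def by simp
    have "\<forall>b\<in>set (take (Suc j) s). b \<le> c"
    proof
      fix b assume "b \<in> set (take (Suc j) s)"
      then obtain i where i: "i < length (take (Suc j) s)" "b = take (Suc j) s ! i"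
        by (auto simp: in_set_conv_nth)
      have "b = s ! i" "i \<le> j + k" using i by auto
      then have "b \<le> s ! (j+k)" using sorted_nth_mono[OF ssorted _ ik] by simp
      then show "b \<le> c" using ai a(2) by simp
    qed
    then have "filter (\<lambda>b. b \<le> c) (take (Suc j) s) = take (Suc j) s" by simp
    then have "sum_list (take (Suc j) s) \<le> sum_list (filter (\<lambda>b. b \<le> c) s)"
      using sum_list_take_le[OF snn, of "\<lambda>b. b \<le> c" "Suc j"] by simp
    then show ?thesis using j(2) jl sumF[of "\<lambda>b. b \<le> c"] by simp
  qed
  have vnn: "\<And>a. a \<in> set v \<Longrightarrow> a \<ge> 0" using vs snn by auto
  have vpos: "x / real n < a" if a: "a \<in> set v" for a
  proof -
    let ?T = "{i\<in>{1..n}. q i \<le> a}"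
    have "x < (\<Sum>i\<in>?T. q i)" using keyB[OF a] by simp
    also have "\<dots> \<le> real (card ?T) * a" using sum_bounded_above[of ?T q a] by simp
    also have "\<dots> \<le> real n * a"
    proof -
      have "card ?T \<le> card {1..n}" by (intro card_mono) auto
      then show ?thesis using vnn[OF a] by (intro mult_right_mono) auto
    qed
    finally show ?thesis using n1 by (simp add: divide_less_eq mult.commute)
  qed
  have vle1: "a \<le> 1" if a: "a \<in> set v" for a
  proof -
    obtain i where i: "i \<in> {1..n}" "a = q i" using vs[OF a] sets by auto
    have "q i \<le> (\<Sum>i=1..n. q i)" using i qnn by (intro member_le_sum) auto
    then show ?thesis using i qs1 by simp
  qed
  have sumv: "sum_list v \<le> 1"
  proof -
    have "sum_list v = sum_list (filter (\<lambda>_. True) v)" by simp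
    also have "\<dots> \<le> sum_list (filter (\<lambda>_. True) s)" unfolding v_def by (rule sum_list_drop_le[OF snn])
    also have "\<dots> = 1"
    proof -
      have e: "{i\<in>{1..n}. True} = {1..n}" by auto
      show ?thesis by (simp only: sumF e qs1)
    qed
    finally show ?thesis .
  qed
  have lenv: "length v \<le> n" unfolding v_def using slen by simp
  define y where "y = log 2 (real n / x)"
  have nx: "real n / x > 1" using n1 assms(2,3) by (simp add: field_simps)
  have y0: "y > 0" unfolding y_def using nx by simp
  define L where "L = nat \<lfloor>y\<rfloor> + 1"
  have rL: "real L = of_int \<lfloor>y\<rfloor> + 1" unfolding L_def using y0 by simp
  have LleY: "real L \<le> y + 1" using rL by linarith
  have YltL: "y < real L" using rL by linarith
  have n_lt: "real n < 2 ^ L"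
  proof -
    have "real n / x = 2 powr y" unfolding y_def using nx by simp
    also have "\<dots> < 2 powr (real L)" using YltL by simp
    also have "\<dots> = 2 ^ L" by (simp add: powr_realpow)
    finally have "real n < 2 ^ L * x" using assms(2) by (simp add: divide_less_eq)
    also have "\<dots> < 2 ^ L" using assms(3) by simp
    finally show ?thesis .
  qed
  define kb where "kb = (\<lambda>a::real. nat \<lfloor>log 2 (1/a)\<rfloor>)"
  have kbL: "\<forall>a\<in>set v. kb a < L"
  proof
    fix a assume a: "a \<in> set v"
    have "x / real n > 0" using assms(2) n1 by simp
    then have apos: "a > 0" using vpos[OF a] by linarith
    have "1 / a < real n / x" using vpos[OF a] apos assms(2) n1 by (simp add: field_simps)
    then have "log 2 (1/a) < y" unfolding y_def using apos nx by (subst log_less_cancel_iff) auto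
    then have "\<lfloor>log 2 (1/a)\<rfloor> \<le> \<lfloor>y\<rfloor>" by (intro floor_mono) simp
    then show "kb a < L" unfolding kb_def L_def by linarith
  qed
  have vpos0: "a > 0" if a: "a \<in> set v" for a
  proof -
    have "x / real n > 0" using assms(2) n1 by simp
    then show ?thesis using vpos[OF a] by linarith
  qed
  define B where "B k = filter (\<lambda>a. kb a = k) v" for k
  define m where "m k = real (length (B k))" for k
  define mu where "mu k = sum_list (B k)" for k
  define sg where "sg k = (\<Sum>a\<leftarrow>B k. sqrt a)" for k
  have mu0: "mu k \<ge> 0" for k unfolding mu_def B_def using vnn by (intro sum_list_nonneg) auto
  have mbound: "m k \<le> 4 * (R + 1)" for k
  proof (cases "B k = []")
    case True then show ?thesis unfolding m_def using R0 by simp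
  next
    case False
    then obtain a where a: "a \<in> set (B k)" by (cases "B k") auto
    have av: "a \<in> set v" and ak: "kb a = k" using a unfolding B_def by auto
    define c :: real where "c = (1/2)^k"
    have c0: "c > 0" unfolding c_def by simp
    define T where "T = {i\<in>{1..n}. q i \<le> c}"
    have ac: "a \<le> c" using dyadic[OF vpos0[OF av] vle1[OF av]] ak unfolding c_def kb_def by simp
    have xT: "x < qsum q T" using keyB[OF av ac] unfolding qsum_def T_def by simp
    have Tne: "T \<noteq> {}" using xT assms(2) unfolding qsum_def by auto
    have Tsub: "T \<subseteq> {1..n}" unfolding T_def by auto
    have finT: "finite T" using Tsub finite_subset by blast
    have RqR: "real_of_int (Rq q T) \<le> R" using memA[OF Tsub Tne] xT by simp
    have qmc: "qmax q T \<le> c" unfolding qmax_def using finT Tne by (simp add: T_def)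
    have qmpos: "qmax q T > 0"
    proof (rule ccontr)
      assume "\<not> qmax q T > 0"
      then have mx: "Max (q ` T) \<le> 0" unfolding qmax_def by simp
      have "\<forall>i\<in>T. q i \<le> 0"
      proof
        fix i assume "i \<in> T"
        then have "q i \<le> Max (q ` T)" using finT by (intro Max_ge) auto
        then show "q i \<le> 0" using mx by simp
      qed
      then have "qsum q T \<le> 0" unfolding qsum_def by (intro sum_nonpos) auto
      then show False using xT assms(2) by simp
    qed
    have Bfilt: "B k = filter (\<lambda>b. kb b = k \<and> 0 < b \<and> b \<le> 1) v"
      unfolding B_def using vpos0 vle1 by (intro filter_cong) auto
    have muT: "mu k \<le> qsum q T"
    proof -
      have "mu k = sum_list (filter (\<lambda>b. kb b = k \<and> 0 < b \<and> b \<le> 1) (drop j s))"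
        unfolding mu_def Bfilt v_def ..
      also have "\<dots> \<le> sum_list (filter (\<lambda>b. kb b = k \<and> 0 < b \<and> b \<le> 1) s)"
        by (rule sum_list_drop_le[OF snn])
      also have "\<dots> \<le> sum_list (filter (\<lambda>b. b \<le> c) s)"
      proof (rule sum_list_filter_mono[OF snn])
        fix b assume "kb b = k \<and> 0 < b \<and> b \<le> 1"
        then show "b \<le> c" using dyadic[of b] unfolding c_def kb_def by auto
      qed
      also have "\<dots> = qsum q T" using sumF[of "\<lambda>b. b \<le> c"] unfolding qsum_def T_def by simp
      finally show ?thesis .
    qed
    have mulow: "m k * (1/2)^(k+1) \<le> mu k"
      unfolding m_def mu_def
    proof (rule sum_list_lower)
      show "\<forall>b\<in>set (B k). (1/2)^(k+1) \<le> b"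
        using dyadic vpos0 vle1 unfolding B_def kb_def by (auto intro: less_imp_le)
    qed
    have qs0: "qsum q T \<ge> 0" using xT assms(2) by simp
    have "m k / 4 = m k * (1/2)^(k+1) / (2 * c)" unfolding c_def by (simp add: field_simps)
    also have "\<dots> \<le> qsum q T / (2 * c)" using mulow muT c0 by (intro divide_right_mono) auto
    also have "\<dots> \<le> qsum q T / (2 * qmax q T)" using qs0 qmc qmpos by (intro divide_left_mono) auto
    finally have "m k / 4 - 1 < real_of_int (Rq q T)" unfolding Rq_def by linarith
    then show ?thesis using RqR by simp
  qed
  have sgsq: "(sg k)\<^sup>2 \<le> m k * mu k" for k
  proof -
    have "(sg k)\<^sup>2 \<le> real (length (B k)) * (\<Sum>a\<leftarrow>B k. (sqrt a)\<^sup>2)"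
      unfolding sg_def by (rule list_cs)
    also have "(\<Sum>a\<leftarrow>B k. (sqrt a)\<^sup>2) = (\<Sum>a\<leftarrow>B k. a)"
      using vnn unfolding B_def by (intro arg_cong[where f=sum_list] map_cong) auto
    finally show ?thesis unfolding m_def mu_def by simp
  qed
  have sumsqrt: "(\<Sum>a\<leftarrow>v. sqrt a) = (\<Sum>k<L. sg k)"
    unfolding sg_def B_def by (rule sum_list_partition[OF kbL])
  have summu: "sum_list v = (\<Sum>k<L. mu k)"
    using sum_list_partition[OF kbL, of "\<lambda>a. a"] unfolding mu_def B_def by simp
  define W where "W = (\<Sum>a\<leftarrow>v. sqrt a)\<^sup>2"
  have W0: "W \<ge> 0" unfolding W_def by simp
  have Wb: "W \<le> 4 * real L * (R + 1)"
  proof -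
    have "W = (\<Sum>k<L. sg k)\<^sup>2" unfolding W_def sumsqrt ..
    also have "\<dots> \<le> (\<Sum>k<L. (sg k)\<^sup>2) * card {..<L}" by (rule sum_squared_le_sum_of_squares)
    also have "\<dots> \<le> (\<Sum>k<L. 4 * (R + 1) * mu k) * real L"
    proof -
      have "(\<Sum>k<L. (sg k)\<^sup>2) \<le> (\<Sum>k<L. 4 * (R + 1) * mu k)"
      proof (rule sum_mono)
        fix k
        have "(sg k)\<^sup>2 \<le> m k * mu k" by (rule sgsq)
        also have "\<dots> \<le> 4 * (R + 1) * mu k" using mbound mu0 by (intro mult_right_mono) auto
        finally show "(sg k)\<^sup>2 \<le> 4 * (R + 1) * mu k" .
      qed
      then show ?thesis by (simp add: mult_right_mono del: distrib_left_numeral distrib_right_numeral)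
    qed
    also have "\<dots> = 4 * (R + 1) * sum_list v * real L" by (simp add: summu sum_distrib_left)
    also have "\<dots> \<le> 4 * (R + 1) * 1 * real L" using sumv R0 by (intro mult_right_mono mult_left_mono) auto
    finally show ?thesis by (simp add: algebra_simps)
  qed
  have Wn: "W \<le> real n"
  proof -
    have "W \<le> real (length v) * (\<Sum>a\<leftarrow>v. (sqrt a)\<^sup>2)" unfolding W_def by (rule list_cs)
    also have "(\<Sum>a\<leftarrow>v. (sqrt a)\<^sup>2) = (\<Sum>a\<leftarrow>v. a)"
      using vnn by (intro arg_cong[where f=sum_list] map_cong) auto
    also have "real (length v) * (\<Sum>a\<leftarrow>v. a) \<le> real n * 1"
      using lenv sumv sum_list_nonneg[of v] vnn by (intro mult_mono) auto
    finally show ?thesis by simp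
  qed
  have rn: "rnorm (1/2) (q_minus n q x) = W"
  proof -
    have "(\<Sum>a\<leftarrow>v. a powr (1/2)) = (\<Sum>a\<leftarrow>v. sqrt a)"
      using vnn by (intro arg_cong[where f=sum_list] map_cong) (auto simp: powr_half_sqrt)
    moreover have "(\<Sum>a\<leftarrow>v. sqrt a) \<ge> 0" using vnn by (intro sum_list_nonneg) auto
    ultimately show ?thesis unfolding rnorm_def W_def j(1) v_def[symmetric] by simp
  qed
  have L1: "real L \<ge> 1" using rL y0 by simp
  have DL: "real L ^ 2 \<le> (y + 1)\<^sup>2" using LleY L1 by (intro power_mono) auto
  have LD0: "real L ^ 2 > 0" using L1 by simp
  have WD: "W / (y + 1)\<^sup>2 \<le> W / real L ^ 2" using W0 DL LD0 y0 by (intro divide_left_mono) (auto intro!: mult_pos_pos)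
  have main: "W / (y + 1)\<^sup>2 - 4 \<le> R"
  proof (cases "L \<ge> 4")
    case True
    have "W / real L ^ 2 \<le> W / (4 * real L)" using True W0 L1
      by (intro divide_left_mono) (auto simp: power2_eq_square)
    also have "\<dots> \<le> R + 1" using Wb L1 by (simp add: divide_le_eq mult.commute mult.left_commute)
    finally show ?thesis using WD by linarith
  next
    case False
    then have "L \<in> {1,2,3}" using L1 by auto
    then have "(2::real) ^ L \<le> 4 * real L ^ 2" by auto
    then have "W \<le> 4 * real L ^ 2" using Wn n_lt by linarith
    then have "W / real L ^ 2 \<le> 4" using LD0 by (simp add: divide_le_eq)
    then show ?thesis using WD R0 by linarith
  qed
  show ?thesis using main unfolding rn[symmetric] R_def A_def y_def .
qed

end
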